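(* Let $k\ge3$ be odd, let $G=(V,E)$ be a $k$-uniform power hypergraph, and let $\mathbf x\in\mathbb R^n$ be an H-eigenvector of its Laplacian tensor $\mathcal L$ corresponding to an H-eigenvalue $\lambda\neq1$. Let $e\in E$. (i) If $e$ has exactly one intersectional vertex $i$ and $x_s\neq0$ for some cored vertex $s\in e$, then $(1-\lambda)x_s=x_i$. (ii) If $e$ has exactly two intersectional vertices $i$ and $j$ and $x_s\neq0$ for some cored vertex $s\in e$, then $x_ix_j=(1-\lambda)x_s^2$.
   Context: A $k$-uniform power hypergraph is the $k$-th power $H^k$ of a simple graph $H=(V_H,E_H)$: for each edge $e\in E_H$ add $k-2$ new distinct vertices $i_{e,1},\ldots,i_{e,k-2}$ (different for different edges and not in $V_H$), and take as edges the sets $e\cup\{i_{e,1},\ldots,i_{e,k-2}\}$, $e\in E_H$. For a $k$-uniform hypergraph with vertex set $[n]$, $d_i$ is the number of edges containing $i$; a vertex of degree one is a cored vertex and a vertex of degree larger than one is an intersectional vertex. The Laplacian tensor $\mathcal L=\mathcal D-\mathcal A$ ($\mathcal D$ diagonal with entries $d_i$, $\mathcal A$ with entries $\frac1{(k-1)!}$ at index tuples forming an edge and $0$ otherwise) satisfies $(\mathcal L\mathbf x^{k-1})_i=d_ix_i^{k-1}-\sum_{e\ni i}\prod_{s\in e\setminus\{i\}}x_s$. A real $\lambda$ is an H-eigenvalue with H-eigenvector $\mathbf x\neq0$ if $(\mathcal L\mathbf x^{k-1})_i=\lambda x_i^{k-1}$ for all $i$. *)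

theory Defs
  imports Complex_Main
begin

text \<open>Hypergraphs on the vertex set {0..<n} (standing for [n]), given by their edge set.\<close>

definition simple_graph :: "nat set \<Rightarrow> nat set set \<Rightarrow> bool" where
  "simple_graph VH EH \<longleftrightarrow> finite VH \<and> (\<forall>e\<in>EH. e \<subseteq> VH \<and> card e = 2)"

text \<open>G = (V,E) is the k-th power of the simple graph H = (VH, EH): each edge e of H gets
  k-2 fresh vertices add e (pairwise disjoint for distinct edges, disjoint from VH).\<close>
definition is_power_of :: "nat \<Rightarrow> nat set \<Rightarrow> nat set set \<Rightarrow> nat set \<Rightarrow> nat set set \<Rightarrow> bool" where
  "is_power_of k V E VH EH \<longleftrightarrow> simple_graph VH EH \<and>
     (\<exists>add :: nat set \<Rightarrow> nat set.
        (\<forall>e\<in>EH. card (add e) = k - 2 \<and> finite (add e) \<and> add e \<inter> VH = {}) \<and>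
        (\<forall>e\<in>EH. \<forall>e'\<in>EH. e \<noteq> e' \<longrightarrow> add e \<inter> add e' = {}) \<and>
        V = VH \<union> (\<Union>e\<in>EH. add e) \<and>
        E = (\<lambda>e. e \<union> add e) ` EH)"

definition power_hypergraph :: "nat \<Rightarrow> nat \<Rightarrow> nat set set \<Rightarrow> bool" where
  "power_hypergraph k n E \<longleftrightarrow> (\<exists>VH EH. is_power_of k {0..<n} E VH EH)"

definition hdeg :: "nat set set \<Rightarrow> nat \<Rightarrow> nat" where
  "hdeg E i = card {e\<in>E. i \<in> e}"

definition cored :: "nat set set \<Rightarrow> nat \<Rightarrow> bool" where
  "cored E i \<longleftrightarrow> hdeg E i = 1"

definition intersectional :: "nat set set \<Rightarrow> nat \<Rightarrow> bool" where
  "intersectional E i \<longleftrightarrow> hdeg E i > 1"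

definition lap_apply :: "nat \<Rightarrow> nat set set \<Rightarrow> (nat \<Rightarrow> real) \<Rightarrow> nat \<Rightarrow> real" where
  "lap_apply k E x i = real (hdeg E i) * x i ^ (k - 1) - (\<Sum>e\<in>{e\<in>E. i \<in> e}. \<Prod>s\<in>e - {i}. x s)"

definition lap_H_eigenpair :: "nat \<Rightarrow> nat \<Rightarrow> nat set set \<Rightarrow> real \<Rightarrow> (nat \<Rightarrow> real) \<Rightarrow> bool" where
  "lap_H_eigenpair k n E lam x \<longleftrightarrow> (\<exists>i<n. x i \<noteq> 0) \<and>
     (\<forall>i<n. lap_apply k E x i = lam * x i ^ (k - 1))"

end

theory Submission
  imports Defs
begin

lemma odd_pow_inj:
  fixes a b :: real
  assumes "odd k" "a ^ k = b ^ k"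
  shows "a = b"
proof -
  obtain m where m: "k = Suc (2*m)" using assms(1) by (metis oddE Suc_eq_plus1 add.commute)
  have neg: "\<And>c::real. c < 0 \<Longrightarrow> c ^ k < 0" using m odd_power_less_zero by blast
  have nn: "\<And>c::real. c \<ge> 0 \<Longrightarrow> c ^ k \<ge> 0" by simp
  have k0: "k > 0" using m by simp
  show ?thesis
  proof (cases "a \<ge> 0")
    case True
    then show ?thesis
    proof (cases "b \<ge> 0")
      case True
      then show ?thesis using \<open>a \<ge> 0\<close> assms(2) k0 by (simp add: power_eq_iff_eq_base)
    next
      case False
      have "b ^ k < 0" using False by (intro neg) simp
      moreover have "a ^ k \<ge> 0" using \<open>a \<ge> 0\<close> by simp
      ultimately show ?thesis using assms(2) by linarith
    qed
  next
    case False
    then show ?thesis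
    proof (cases "b \<ge> 0")
      case True
      have "a ^ k < 0" using \<open>\<not> a \<ge> 0\<close> by (intro neg) simp
      moreover have "b ^ k \<ge> 0" using True by simp
      ultimately show ?thesis using assms(2) by linarith
    next
      case False
      have "(-a) ^ k = (-b) ^ k" using assms by (simp add: power_minus_odd)
      hence "-a = -b" using False \<open>\<not> a \<ge> 0\<close> k0 by (simp add: power_eq_iff_eq_base)
      thus ?thesis by simp
    qed
  qed
qed

theorem lemma4p1:
  fixes k n :: nat and E :: "nat set set" and lam :: real and x :: "nat \<Rightarrow> real" and e :: "nat set"
  assumes "k \<ge> 3" and "odd k"
    and "power_hypergraph k n E"
    and "lap_H_eigenpair k n E lam x"
    and "lam \<noteq> 1"
    and "e \<in> E"
  shows "(\<forall>i s. {v\<in>e. intersectional E v} = {i} \<and> s \<in> e \<and> cored E s \<and> x s \<noteq> 0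
              \<longrightarrow> (1 - lam) * x s = x i)
       \<and> (\<forall>i j s. i \<noteq> j \<and> {v\<in>e. intersectional E v} = {i, j} \<and> s \<in> e \<and> cored E s \<and> x s \<noteq> 0
              \<longrightarrow> x i * x j = (1 - lam) * x s ^ 2)"
proof -
  obtain VH EH add where sg: "simple_graph VH EH"
    and a1: "\<forall>e\<in>EH. card (add e) = k - 2 \<and> finite (add e) \<and> add e \<inter> VH = {}"
    and V: "{0..<n} = VH \<union> (\<Union>e\<in>EH. add e)"
    and Eq: "E = (\<lambda>e. e \<union> add e) ` EH"
    using assms(3) unfolding power_hypergraph_def is_power_of_def by blast
  obtain e0 where e0: "e0 \<in> EH" "e = e0 \<union> add e0" using assms(6) Eq by blast
  have fVH: "finite VH" and e0s: "e0 \<subseteq> VH" "card e0 = 2" using sg e0 unfolding simple_graph_def by auto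
  have finEH: "finite EH"
    using sg unfolding simple_graph_def by (meson PowI finite_Pow_iff rev_finite_subset subsetI)
  have finE: "finite E" using finEH Eq by simp
  have fe0: "finite e0" using fVH e0s by (meson rev_finite_subset)
  have fin: "finite e" using e0 a1 fe0 by auto
  have cardk: "card e = k"
  proof -
    have "e0 \<inter> add e0 = {}" using a1 e0 e0s by blast
    hence "card e = card e0 + card (add e0)" using e0 a1 fe0 by (simp add: card_Un_disjoint)
    thus ?thesis using e0s a1 e0 assms(1) by simp
  qed
  have "e \<subseteq> VH \<union> (\<Union>e\<in>EH. add e)" using e0 e0s by blast
  hence "e \<subseteq> {0..<n}" unfolding V .
  hence esub: "\<forall>v\<in>e. v < n" by auto
  have deg: "\<And>v. v \<in> e \<Longrightarrow> hdeg E v \<ge> 1"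
  proof -
    fix v assume "v \<in> e"
    hence "e \<in> {e\<in>E. v \<in> e}" using assms(6) by simp
    moreover have "finite {e\<in>E. v \<in> e}" using finE by simp
    ultimately have "card {e\<in>E. v \<in> e} > 0" using card_gt_0_iff by blast
    thus "hdeg E v \<ge> 1" unfolding hdeg_def by simp
  qed
  have nonint: "\<And>v. v \<in> e \<Longrightarrow> \<not> intersectional E v \<Longrightarrow> cored E v"
    using deg unfolding intersectional_def cored_def by force
  have eig: "\<And>t. t \<in> e \<Longrightarrow> cored E t \<Longrightarrow> (1 - lam) * x t ^ (k - 1) = (\<Prod>u\<in>e - {t}. x u)"
  proof -
    fix t assume t: "t \<in> e" "cored E t"
    have "card {e\<in>E. t \<in> e} = 1" using t unfolding cored_def hdeg_def by simp
    then obtain f where f: "{e\<in>E. t \<in> e} = {f}" by (rule card_1_singletonE)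
    have "e \<in> {e\<in>E. t \<in> e}" using t assms(6) by simp
    hence "e = f" unfolding f by simp
    hence ff: "{e\<in>E. t \<in> e} = {e}" using f by simp
    have all: "\<forall>i<n. lap_apply k E x i = lam * x i ^ (k - 1)" using assms(4)
      unfolding lap_H_eigenpair_def by simp
    have "t < n" using esub t(1) by simp
    hence "lap_apply k E x t = lam * x t ^ (k - 1)" using all by simp
    hence "x t ^ (k - 1) - (\<Prod>u\<in>e - {t}. x u) = lam * x t ^ (k - 1)"
      using t(2) unfolding lap_apply_def ff cored_def by simp
    thus "(1 - lam) * x t ^ (k - 1) = (\<Prod>u\<in>e - {t}. x u)" by (simp add: algebra_simps)
  qed
  define P where "P = (\<Prod>u\<in>e. x u)"
  have eigP: "\<And>t. t \<in> e \<Longrightarrow> cored E t \<Longrightarrow> (1 - lam) * x t ^ k = P"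
  proof -
    fix t assume t: "t \<in> e" "cored E t"
    have "P = x t * (\<Prod>u\<in>e - {t}. x u)" unfolding P_def using fin t by (simp add: prod.remove)
    also have "\<dots> = (1 - lam) * (x t * x t ^ (k - 1))" using eig[OF t] by simp
    also have "x t * x t ^ (k - 1) = x t ^ k" proof -
      have "k = Suc (k - 1)" using assms(1) by simp
      thus ?thesis by (metis power_Suc)
    qed
    finally show "(1 - lam) * x t ^ k = P" by simp
  qed
  have same: "\<And>t s. t \<in> e \<Longrightarrow> cored E t \<Longrightarrow> s \<in> e \<Longrightarrow> cored E s \<Longrightarrow> x t = x s"
  proof -
    fix t s assume "t \<in> e" "cored E t" "s \<in> e" "cored E s"
    hence "(1 - lam) * x t ^ k = (1 - lam) * x s ^ k" using eigP by simp
    hence "x t ^ k = x s ^ k" using assms(5) by simp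
    thus "x t = x s" using odd_pow_inj assms(2) by blast
  qed
  show ?thesis
  proof (intro conjI allI impI)
    fix i s assume h: "{v\<in>e. intersectional E v} = {i} \<and> s \<in> e \<and> cored E s \<and> x s \<noteq> 0"
    have ie: "i \<in> e" "i \<noteq> s" using h unfolding cored_def intersectional_def by auto
    have rest: "\<And>u. u \<in> e - {s} - {i} \<Longrightarrow> x u = x s"
    proof -
      fix u assume u: "u \<in> e - {s} - {i}"
      hence "\<not> intersectional E u" using h by blast
      hence "cored E u" using nonint u by blast
      thus "x u = x s" using same u h by blast
    qed
    have "(\<Prod>u\<in>e - {s}. x u) = x i * (\<Prod>u\<in>e - {s} - {i}. x u)"
      using fin ie by (simp add: prod.remove)
    also have "(\<Prod>u\<in>e - {s} - {i}. x u) = x s ^ card (e - {s} - {i})"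
      using rest by simp
    also have "card (e - {s} - {i}) = k - 2" using cardk fin ie h by simp
    finally have "(1 - lam) * x s ^ (k - 1) = x i * x s ^ (k - 2)" using eig h by simp
    moreover have "x s ^ (k - 1) = x s * x s ^ (k - 2)" proof -
      have "k - 1 = Suc (k - 2)" using assms(1) by simp
      thus ?thesis by simp
    qed
    ultimately have "((1 - lam) * x s) * x s ^ (k - 2) = x i * x s ^ (k - 2)" by simp
    thus "(1 - lam) * x s = x i" using h by simp
  next
    fix i j s assume h: "i \<noteq> j \<and> {v\<in>e. intersectional E v} = {i, j} \<and> s \<in> e \<and> cored E s \<and> x s \<noteq> 0"
    have ie: "i \<in> e" "i \<noteq> s" "j \<in> e" "j \<noteq> s" "i \<noteq> j" using h unfolding cored_def intersectional_def by auto
    have rest: "\<And>u. u \<in> e - {s} - {i} - {j} \<Longrightarrow> x u = x s"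
    proof -
      fix u assume u: "u \<in> e - {s} - {i} - {j}"
      hence "\<not> intersectional E u" using h by blast
      hence "cored E u" using nonint u by blast
      thus "x u = x s" using same u h by blast
    qed
    have "(\<Prod>u\<in>e - {s}. x u) = x i * (\<Prod>u\<in>e - {s} - {i}. x u)"
      using fin ie by (simp add: prod.remove)
    also have "(\<Prod>u\<in>e - {s} - {i}. x u) = x j * (\<Prod>u\<in>e - {s} - {i} - {j}. x u)"
      using fin ie by (simp add: prod.remove)
    also have "(\<Prod>u\<in>e - {s} - {i} - {j}. x u) = x s ^ card (e - {s} - {i} - {j})"
      using rest by simp
    also have "card (e - {s} - {i} - {j}) = k - 3" using cardk fin ie h by simp
    finally have "(1 - lam) * x s ^ (k - 1) = x i * (x j * x s ^ (k - 3))" using eig h by simp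
    moreover have "x s ^ (k - 1) = x s ^ 2 * x s ^ (k - 3)" proof -
      have "k - 1 = 2 + (k - 3)" using assms(1) by simp
      thus ?thesis by (simp add: power_add power2_eq_square)
    qed
    ultimately have "((1 - lam) * x s ^ 2) * x s ^ (k - 3) = (x i * x j) * x s ^ (k - 3)" by (simp add: algebra_simps)
    thus "x i * x j = (1 - lam) * x s ^ 2" using h by simp
  qed
qed

end
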